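(* Let $n\in\mathbb{N}_{\geqslant 2}$, $k \in \{1,2,\dots ,2^n-1\}$ and $s \in \{0,1,\dots ,n-2\}$. Write $k=\sum_{i}k_i2^i$ in binary, and for $t\in\mathbb{N}_0$ define $a^k_{t},b^k_{t}\in\mathbb{N}_0$ by $k=a^k_{t}2^t+b^k_{t}$ with $0\leqslant b^k_t<2^t$. Suppose $|\psi\rangle$ is an $n$-qubit state of the form $$|\psi\rangle=\left(\sum_{l=a^k_s}^{2^{n-s}-1} c_l|l\rangle\right) \otimes |k_{s-1}k_{s-2}\dots k_{0}\rangle,$$ with $c_l\in \mathbb{C}$ (for $s=0$ the second tensor factor is absent), and assume that $c_{2a^k_{s+1}+1}=0$ if $k_s=0$ and $b^k_{s+1}\neq 0$. Then there exists a uniformly controlled gate $A$ of the form $$A=\sum_{l=0}^{2^{n-1-s}-1} |l\rangle\langle l| \otimes U_l \otimes I^{ \otimes s},$$ with single-qubit unitaries $U_l$, such that $$A|\psi\rangle=\left(\sum_{l=a^k_{s+1}}^{2^{n-(s+1)}-1} c'_l|l\rangle\right) \otimes |k_{s}k_{s-1}\dots k_{0}\rangle$$ for some $c'_l\in \mathbb{C}$, and additionally $A|i\rangle=|i\rangle$ for all $i\in\{0,1,\ldots,k-1\}$.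
   Context: Computational basis states are labelled by integers, $|b_{n-1}\dots b_0\rangle=|\sum_i b_i2^i\rangle$, with the most significant qubit first; the number of qubits of $|l\rangle$ is clear from context. The gate $A$ acts as a single-qubit unitary on the $(n-s)$th qubit (counting from the most significant), conditioned uniformly on the $n-1-s$ more significant qubits, and trivially on the $s$ least significant qubits. *)

theory Defs
  imports Complex_Main
begin

text \<open>n-qubit states are represented as amplitude functions nat => complex, supported on
  indices below 2^n; index x corresponds to the computational basis state |x>
  (most significant qubit first).\<close>

definition basis_state :: "nat \<Rightarrow> nat \<Rightarrow> complex" where
  "basis_state i = (\<lambda>x. if x = i then 1 else 0)"

text \<open>The n-qubit state (sum over l from a^k_t to 2^(n-t)-1 of c_l |l>) tensor |k_(t-1) ... k_0>,
  where a^k_t = k div 2^t and k_(t-1)...k_0 is the binary string of b^k_t = k mod 2^t.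
  The basis index of |l> tensor |b> is l * 2^t + b.\<close>
definition tail_state :: "nat \<Rightarrow> nat \<Rightarrow> nat \<Rightarrow> (nat \<Rightarrow> complex) \<Rightarrow> nat \<Rightarrow> complex" where
  "tail_state n t k c = (\<lambda>x. if x < 2^n \<and> x mod 2^t = k mod 2^t \<and> k div 2^t \<le> x div 2^t
                              then c (x div 2^t) else 0)"

definition unitary2 :: "(nat \<Rightarrow> nat \<Rightarrow> complex) \<Rightarrow> bool" where
  "unitary2 u \<longleftrightarrow> (\<forall>i<2. \<forall>j<2. (\<Sum>m<2. cnj (u m i) * u m j) = (if i = j then 1 else 0))"

text \<open>Matrix entries (row y, column x) of the uniformly controlled gate
  A = sum over l < 2^(n-1-s) of |l><l| tensor U_l tensor I^(tensor s) on n qubits.\<close>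
definition ucg_matrix :: "nat \<Rightarrow> nat \<Rightarrow> (nat \<Rightarrow> nat \<Rightarrow> nat \<Rightarrow> complex) \<Rightarrow> nat \<Rightarrow> nat \<Rightarrow> complex" where
  "ucg_matrix n s U y x =
     (if y < 2^n \<and> x < 2^n \<and> y div 2^(s+1) = x div 2^(s+1) \<and> y mod 2^s = x mod 2^s
      then U (y div 2^(s+1)) ((y div 2^s) mod 2) ((x div 2^s) mod 2) else 0)"

definition apply_op :: "nat \<Rightarrow> (nat \<Rightarrow> nat \<Rightarrow> complex) \<Rightarrow> (nat \<Rightarrow> complex) \<Rightarrow> nat \<Rightarrow> complex" where
  "apply_op n M \<psi> = (\<lambda>y. \<Sum>x<2^n. M y x * \<psi> x)"

end

theory Submission
  imports Defs
begin

definition mat2 :: "complex \<Rightarrow> complex \<Rightarrow> complex \<Rightarrow> complex \<Rightarrow> nat \<Rightarrow> nat \<Rightarrow> complex" where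
  "mat2 a b c d = (\<lambda>i j. if i = 0 then (if j = 0 then a else b) else (if j = 0 then c else d))"

definition Id2 :: "nat \<Rightarrow> nat \<Rightarrow> complex" where "Id2 = mat2 1 0 0 1"

definition rot :: "complex \<Rightarrow> complex \<Rightarrow> nat \<Rightarrow> nat \<Rightarrow> nat \<Rightarrow> complex" where
  "rot \<alpha> \<beta> t = (let r = complex_of_real (sqrt (norm \<alpha> ^ 2 + norm \<beta> ^ 2)) in
     if t = 0 then (if \<beta> = 0 then Id2 else mat2 (cnj \<alpha> / r) (cnj \<beta> / r) (- \<beta> / r) (\<alpha> / r))
     else (if \<alpha> = 0 then Id2 else mat2 (\<beta> / r) (- \<alpha> / r) (cnj \<alpha> / r) (cnj \<beta> / r)))"

lemma sum2: "(\<Sum>m<(2::nat). f m) = f 0 + (f 1 :: complex)"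
  by (simp add: numeral_2_eq_2)

lemma unitary2_mat2:
  "unitary2 (mat2 a b c d) \<longleftrightarrow>
     cnj a * a + cnj c * c = 1 \<and> cnj a * b + cnj c * d = 0 \<and> cnj b * a + cnj d * c = 0
     \<and> cnj b * b + cnj d * d = 1"
proof -
  have all2: "\<And>P. (\<forall>i<2::nat. P i) = (P 0 \<and> P 1)" by (auto simp: less_2_cases_iff)
  show ?thesis unfolding unitary2_def sum2 all2 by (simp add: mat2_def)
qed

lemma unitary_Id2: "unitary2 Id2"
  unfolding Id2_def unitary2_mat2 by simp

lemma normsq: "cnj a * a + cnj b * b = (complex_of_real (sqrt (norm a ^ 2 + norm b ^ 2)))^2"
proof -
  have h: "(sqrt (norm a ^ 2 + norm b ^ 2))^2 = norm a ^ 2 + norm b ^ 2" by simp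
  have "(complex_of_real (sqrt (norm a ^ 2 + norm b ^ 2)))^2 = complex_of_real (norm a ^ 2 + norm b ^ 2)"
    by (metis h of_real_power)
  also have "\<dots> = complex_of_real (norm a ^ 2) + complex_of_real (norm b ^ 2)"
    by (rule of_real_add)
  also have "\<dots> = cnj a * a + cnj b * b"
    by (simp only: complex_norm_square mult.commute)
  finally show ?thesis by simp
qed

lemma r_nz: "b \<noteq> 0 \<or> a \<noteq> 0 \<Longrightarrow> complex_of_real (sqrt (norm a ^ 2 + norm b ^ 2)) \<noteq> 0"
  by (auto simp: add_nonneg_eq_0_iff)

lemma rot_unitary: "unitary2 (rot a b t)"
proof -
  define r where "r = complex_of_real (sqrt (norm a ^ 2 + norm b ^ 2))"
  have cr: "cnj r = r" unfolding r_def by simp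
  have sq: "cnj a * a + cnj b * b = r * r" unfolding r_def using normsq[of a b] by (simp add: power2_eq_square)
  show ?thesis
  proof (cases "t = 0")
    case True
    show ?thesis
    proof (cases "b = 0")
      case True with \<open>t=0\<close> show ?thesis by (simp add: rot_def unitary_Id2)
    next
      case False
      hence rn: "r \<noteq> 0" unfolding r_def using r_nz by blast
      have "unitary2 (mat2 (cnj a / r) (cnj b / r) (- b / r) (a / r))"
        unfolding unitary2_mat2 using rn cr sq
        by (simp add: field_simps; simp add: algebra_simps)
      then show ?thesis using True False by (simp add: rot_def r_def Let_def)
    qed
  next
    case False
    show ?thesis
    proof (cases "a = 0")
      case True with False show ?thesis by (simp add: rot_def unitary_Id2)
    next
      case F2: False
      hence rn: "r \<noteq> 0" unfolding r_def using r_nz by blast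
      have "unitary2 (mat2 (b / r) (- a / r) (cnj a / r) (cnj b / r))"
        unfolding unitary2_mat2 using rn cr sq
        by (simp add: field_simps; simp add: algebra_simps)
      then show ?thesis using F2 False by (simp add: rot_def r_def Let_def)
    qed
  qed
qed

lemma rot_kill: "t < 2 \<Longrightarrow> j < 2 \<Longrightarrow> j \<noteq> t \<Longrightarrow> rot a b t j 0 * a + rot a b t j 1 * b = 0"
  by (auto simp: rot_def Let_def mat2_def Id2_def less_2_cases_iff field_simps)

lemma rot_id0: "b = 0 \<Longrightarrow> rot a b 0 = Id2" by (simp add: rot_def)
lemma rot_id1: "a = 0 \<Longrightarrow> rot a b 1 = Id2" by (simp add: rot_def)

lemma divS: "(x::nat) div 2^(s+1) = x div 2^s div 2"
proof -
  have "(2::nat)^(s+1) = 2^s*2" by simp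
  then show ?thesis by (simp only: div_mult2_eq)
qed

lemma modS: "(x::nat) mod 2^(s+1) = (x div 2^s mod 2) * 2^s + x mod 2^s"
proof -
  have "(2::nat)^(s+1) = 2^s*2" by simp
  then show ?thesis by (metis mod_mult2_eq mult.commute)
qed

lemma decompS: "(x::nat) = (2 * (x div 2^(s+1)) + x div 2^s mod 2) * 2^s + x mod 2^s"
proof -
  have "2*(x div 2^s div 2) + x div 2^s mod 2 = x div 2^s" by simp
  then show ?thesis unfolding divS by (metis div_mult_mod_eq)
qed

lemma qm_div: "(m::nat) < 2^s \<Longrightarrow> (q * 2^s + m) div 2^s = q"
  by simp
lemma qm_mod: "(m::nat) < 2^s \<Longrightarrow> (q * 2^s + m) mod 2^s = m"
  by simp

lemma blk_bound:
  assumes "y < (2::nat)^n" "s < n" and that: "m < 2^s"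
  shows "(2 * (y div 2^(s+1)) + 1) * 2^s + m < 2^n"
proof -
  have e: "(2::nat)^n = 2^(n-(s+1)) * 2^(s+1)" proof -
    have "n = (n-(s+1)) + (s+1)" using assms(2) by simp
    then show ?thesis by (metis power_add)
  qed
  have "y div 2^(s+1) < 2^(n-(s+1))" using assms(1) e by (simp add: less_mult_imp_div_less)
  hence "Suc (y div 2^(s+1)) * 2^(s+1) \<le> 2^(n-(s+1)) * 2^(s+1)"
    by (intro mult_right_mono) auto
  moreover have "(2 * (y div 2^(s+1)) + 1) * 2^s + m < Suc (y div 2^(s+1)) * 2^(s+1)"
    using that by (simp add: algebra_simps)
  ultimately show ?thesis using e by linarith
qed

lemma apply_ucg:
  assumes y: "y < (2::nat)^n" and sn: "s < n"
  shows "apply_op n (ucg_matrix n s U) \<phi> y =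
     U (y div 2^(s+1)) (y div 2^s mod 2) 0 * \<phi> ((2 * (y div 2^(s+1))) * 2^s + y mod 2^s)
   + U (y div 2^(s+1)) (y div 2^s mod 2) 1 * \<phi> ((2 * (y div 2^(s+1)) + 1) * 2^s + y mod 2^s)"
proof -
  define l where "l = y div 2^(s+1)"
  define m where "m = y mod 2^s"
  define t where "t = y div 2^s mod 2"
  define x0 where "x0 = (2 * l) * 2^s + m"
  define x1 where "x1 = (2 * l + 1) * 2^s + m"
  have m: "m < 2^s" unfolding m_def by simp
  have x1b: "x1 < 2^n" unfolding x1_def l_def using blk_bound[OF y sn m] .
  have x0b: "x0 < 2^n" using x1b unfolding x0_def x1_def by simp
  have x01: "x0 \<noteq> x1" unfolding x0_def x1_def by simp
  have d0: "x0 div 2^s = 2*l" "x0 mod 2^s = m" unfolding x0_def using m by simp_all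
  have d1: "x1 div 2^s = 2*l+1" "x1 mod 2^s = m" unfolding x1_def by (simp_all only: qm_div[OF m] qm_mod[OF m])
  define S where "S = {x \<in> {..<(2::nat)^n}. x div 2^(s+1) = l \<and> x mod 2^s = m}"
  have S: "S = {x0, x1}"
  proof
    show "S \<subseteq> {x0, x1}"
    proof
      fix x assume "x \<in> S"
      hence xl: "x div 2^(s+1) = l" and xm: "x mod 2^s = m" unfolding S_def by auto
      have "x = (2 * l + x div 2^s mod 2) * 2^s + m" using decompS[of x s] xl xm by simp
      moreover have "x div 2^s mod 2 = 0 \<or> x div 2^s mod 2 = 1" by auto
      ultimately show "x \<in> {x0, x1}" unfolding x0_def x1_def by auto
    qed
  next
    show "{x0, x1} \<subseteq> S" unfolding S_def divS using x0b x1b d0 d1 by auto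
  qed
  have "apply_op n (ucg_matrix n s U) \<phi> y =
        (\<Sum>x<2^n. if x div 2^(s+1) = l \<and> x mod 2^s = m then U l t (x div 2^s mod 2) * \<phi> x else 0)"
    unfolding apply_op_def ucg_matrix_def l_def m_def t_def using y
    by (intro sum.cong) auto
  also have "\<dots> = (\<Sum>x\<in>S. U l t (x div 2^s mod 2) * \<phi> x)"
    unfolding S_def by (rule sum.inter_filter[symmetric]) simp
  also have "\<dots> = U l t 0 * \<phi> x0 + U l t 1 * \<phi> x1"
    unfolding S using x01 d0 d1 by simp
  finally show ?thesis unfolding l_def t_def x0_def x1_def m_def .
qed

lemma apply_basis: "i < (2::nat)^n \<Longrightarrow> apply_op n M (basis_state i) y = M y i"
  unfolding apply_op_def basis_state_def
  by (simp add: if_distrib[of "\<lambda>z. M y _ * z"] cong: if_cong)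

lemma psi_eval: "(m::nat) < 2^s \<Longrightarrow> tail_state n s k c (q*2^s+m) =
   (if q*2^s+m < 2^n \<and> m = k mod 2^s \<and> k div 2^s \<le> q then c q else 0)"
  unfolding tail_state_def by (simp only: qm_div qm_mod)

lemma mat2_entry: "i < 2 \<Longrightarrow> j < 2 \<Longrightarrow> Id2 i j = (if i = j then 1 else 0)"
  by (auto simp: Id2_def mat2_def less_2_cases_iff)

theorem lemma10:
  fixes n k s :: nat and c :: "nat \<Rightarrow> complex"
  assumes "n \<ge> 2"
    and "1 \<le> k" and "k \<le> 2^n - 1"
    and "s \<le> n - 2"
    and "(k div 2^s) mod 2 = 0 \<and> k mod 2^(s+1) \<noteq> 0 \<Longrightarrow> c (2 * (k div 2^(s+1)) + 1) = 0"
  shows "\<exists>U :: nat \<Rightarrow> nat \<Rightarrow> nat \<Rightarrow> complex.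
           (\<forall>l < 2^(n-1-s). unitary2 (U l)) \<and>
           (\<exists>c' :: nat \<Rightarrow> complex.
              apply_op n (ucg_matrix n s U) (tail_state n s k c) = tail_state n (s+1) k c') \<and>
           (\<forall>i < k. apply_op n (ucg_matrix n s U) (basis_state i) = basis_state i)"
proof -
  define \<psi> where "\<psi> = tail_state n s k c"
  define a where "a = k div 2^(s+1)"
  define ks where "ks = k div 2^s mod 2"
  define b where "b = k mod 2^s"
  define U where "U = (\<lambda>l. rot (\<psi> ((2*l)*2^s+b)) (\<psi> ((2*l+1)*2^s+b)) ks)"
  define A where "A = ucg_matrix n s U"
  have sn: "s < n" using assms(1,4) by linarith
  have kn: "k < 2^n" using assms(3) by (metis Suc_pred' le_imp_less_Suc pos2 zero_less_power)
  have b: "b < 2^s" unfolding b_def by simp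
  have ks2: "ks < 2" unfolding ks_def by simp
  have kdiv: "k div 2^s = 2*a + ks" unfolding a_def ks_def divS by simp
  have kmod: "k mod 2^(s+1) = ks * 2^s + b" unfolding ks_def b_def by (rule modS)
  have psi: "\<And>q m. m < 2^s \<Longrightarrow> \<psi> (q*2^s+m) = (if q*2^s+m < 2^n \<and> m = b \<and> 2*a+ks \<le> q then c q else 0)"
    unfolding \<psi>_def using psi_eval kdiv b_def by presburger
  have small: "U l = Id2" if "l < a" for l
  proof -
    have "\<psi> ((2*l)*2^s+b) = 0" using psi[OF b, of "2*l"] that by simp
    moreover have "\<psi> ((2*l+1)*2^s+b) = 0" using psi[OF b, of "2*l+1"] that by simp
    ultimately
    show ?thesis unfolding U_def using ks2 rot_id0 rot_id1 by (auto simp: less_2_cases_iff)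
  qed
  have unit: "\<forall>l < 2^(n-1-s). unitary2 (U l)" unfolding U_def using rot_unitary by blast
  define c' where "c' = (\<lambda>l. apply_op n A \<psi> (l*2^(s+1) + k mod 2^(s+1)))"
  have part2: "apply_op n A \<psi> = tail_state n (s+1) k c'"
  proof
    fix y
    show "apply_op n A \<psi> y = tail_state n (s+1) k c' y"
    proof (cases "y < 2^n \<and> y mod 2^(s+1) = k mod 2^(s+1) \<and> a \<le> y div 2^(s+1)")
      case True
      then have "y = y div 2^(s+1) * 2^(s+1) + k mod 2^(s+1)" by (metis div_mult_mod_eq)
      then show ?thesis using True unfolding tail_state_def c'_def a_def by metis
    next
      case False
      have rhs: "tail_state n (s+1) k c' y = 0" using False unfolding tail_state_def a_def by auto
      show ?thesis
      proof (cases "y < 2^n")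
        case False
        then show ?thesis using rhs unfolding apply_op_def A_def ucg_matrix_def by simp
      next
        case y: True
        define l where "l = y div 2^(s+1)"
        define m where "m = y mod 2^s"
        define t where "t = y div 2^s mod 2"
        have m: "m < 2^s" unfolding m_def by simp
        have t2: "t < 2" unfolding t_def by simp
        have lhs: "apply_op n A \<psi> y = U l t 0 * \<psi> ((2*l)*2^s+m) + U l t 1 * \<psi> ((2*l+1)*2^s+m)"
          unfolding A_def l_def t_def m_def using apply_ucg[OF y sn] .
        have ymod: "y mod 2^(s+1) = t * 2^s + m" unfolding t_def m_def by (rule modS)
        show ?thesis
        proof (cases "m = b")
          case False
          then show ?thesis using lhs rhs psi[OF m, of "2*l"] psi[OF m, of "2*l+1"] by simp
        next
          case mb: True
          show ?thesis
          proof (cases "t = ks")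
            case False
            have "U l t 0 * \<psi> ((2*l)*2^s+b) + U l t 1 * \<psi> ((2*l+1)*2^s+b) = 0"
              unfolding U_def using rot_kill[OF ks2 t2 False] .
            then show ?thesis using lhs rhs mb by simp
          next
            case True
            have "l < a" using False y ymod kmod True mb unfolding l_def by auto
            hence "\<psi> ((2*l)*2^s+m) = 0" "\<psi> ((2*l+1)*2^s+m) = 0"
              using psi[OF m, of "2*l"] psi[OF m, of "2*l+1"] by auto
            then show ?thesis using lhs rhs by simp
          qed
        qed
      qed
    qed
  qed
  have part3: "\<forall>i < k. apply_op n A (basis_state i) = basis_state i"
  proof (intro allI impI)
    fix i assume ik: "i < k"
    have ib: "i < 2^n" using ik kn by simp
    define li where "li = i div 2^(s+1)"
    have li: "li \<le> a" unfolding li_def a_def using ik by (simp add: div_le_mono)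
    have Uid: "U li = Id2"
    proof (cases "li < a")
      case True then show ?thesis by (rule small)
    next
      case False
      hence la: "li = a" using li by simp
      have knz: "k mod 2^(s+1) \<noteq> 0"
      proof
        assume "k mod 2^(s+1) = 0"
        hence "k = a * 2^(s+1)" unfolding a_def by (metis add_0_right div_mult_mod_eq)
        moreover have "a * 2^(s+1) \<le> i" using la unfolding li_def by (metis div_times_less_eq_dividend)
        ultimately show False using ik by simp
      qed
      show ?thesis
      proof (cases "ks = 0")
        case True
        have "c (2*a+1) = 0" using assms(5) True knz unfolding ks_def a_def by blast
        hence "\<psi> ((2*a+1)*2^s+b) = 0" using psi[OF b, of "2*a+1"] by simp
        then show ?thesis unfolding U_def la using True rot_id0 by simp
      next
        case False
        hence "ks = 1" using ks2 by simp
        moreover have "\<psi> ((2*a)*2^s+b) = 0" using psi[OF b, of "2*a"] \<open>ks = 1\<close> by simp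
        ultimately show ?thesis unfolding U_def la using rot_id1 by simp
      qed
    qed
    show "apply_op n A (basis_state i) = basis_state i"
    proof
      fix y
      have "apply_op n A (basis_state i) y = A y i" using apply_basis[OF ib] .
      also have "\<dots> = basis_state i y"
      proof (cases "y < 2^n \<and> y div 2^(s+1) = li \<and> y mod 2^s = i mod 2^s")
        case True
        have e: "A y i = Id2 (y div 2^s mod 2) (i div 2^s mod 2)"
          unfolding A_def ucg_matrix_def using True ib Uid unfolding li_def by simp
        have "y = i \<longleftrightarrow> y div 2^s mod 2 = i div 2^s mod 2"
          using decompS[of y s] decompS[of i s] True unfolding li_def by metis
        then show ?thesis unfolding e basis_state_def by (subst mat2_entry) auto
      next
        case False
        hence "y \<noteq> i" using ib unfolding li_def by auto
        then show ?thesis using False unfolding A_def ucg_matrix_def basis_state_def li_def by auto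
      qed
      finally show "apply_op n A (basis_state i) y = basis_state i y" .
    qed
  qed
  show ?thesis using unit part2 part3 unfolding A_def \<psi>_def by blast
qed

end
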